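(* Let $012345$ be a convex hexagon with area $A$. For $i=0,\dots,5$ (indices mod $6$), let $(i)$ denote the area of the vertex triangle with vertices $i-1,i,i+1$, and let $p$ be the area of the triangle $013$. Then $$\begin{aligned} &[p-(1)]A^2\\ &+\big[(1)(4)+2(1)(2)+(1)(5)-p^2+(1)p+(0)(1)-(2)p-(3)p-(5)p-(4)p-(0)(2)-(0)p\big]A\\ &-(1)(2)(5)-(1)(2)p-(1)(2)(4)-(1)(4)(5)-(1)(2)^2+(2)(3)p+(3)p^2-(0)(1)(5)\\ &+(0)(2)^2+(4)(5)p-(0)(1)(2)+(0)(2)(5)+(0)p^2-(0)(1)p+2(0)(2)p+(0)(5)p+(3)(4)p=0. \end{aligned}$$
   Context: The vertices of the hexagon are labelled $0,\dots,5$ in cyclic order. *)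

theory Defs
  imports Complex_Main
begin

type_synonym point = "real \<times> real"

definition cross :: "point \<Rightarrow> point \<Rightarrow> point \<Rightarrow> real" where
  "cross a b c = (fst b - fst a) * (snd c - snd a) - (snd b - snd a) * (fst c - fst a)"

definition tri_area :: "point \<Rightarrow> point \<Rightarrow> point \<Rightarrow> real" where
  "tri_area a b c = \<bar>cross a b c\<bar> / 2"

definition convex_hexagon :: "(nat \<Rightarrow> point) \<Rightarrow> bool" where
  "convex_hexagon P \<longleftrightarrow>
     (\<forall>i<6. \<forall>j<6. j \<noteq> i \<and> j \<noteq> (i+1) mod 6 \<longrightarrow> cross (P i) (P ((i+1) mod 6)) (P j) > 0) \<or>
     (\<forall>i<6. \<forall>j<6. j \<noteq> i \<and> j \<noteq> (i+1) mod 6 \<longrightarrow> cross (P i) (P ((i+1) mod 6)) (P j) < 0)"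

definition polygon_area :: "nat \<Rightarrow> (nat \<Rightarrow> point) \<Rightarrow> real" where
  "polygon_area n P = \<bar>\<Sum>i<n. fst (P i) * snd (P ((i+1) mod n)) - fst (P ((i+1) mod n)) * snd (P i)\<bar> / 2"

definition vtri :: "(nat \<Rightarrow> point) \<Rightarrow> nat \<Rightarrow> real" where
  "vtri P i = tri_area (P ((i+5) mod 6)) (P (i mod 6)) (P ((i+1) mod 6))"

end

theory Submission
  imports Defs
begin

lemma coreD:
  fixes d12 d13 d14 d15 d23 d24 d25 d34 d35 d45 A p a0 a1 a2 a3 a4 a5 c :: real
  assumes "d12*d34 - d13*d24 + d14*d23 = 0"
  "d12*d35 - d13*d25 + d15*d23 = 0"
  "d12*d45 - d14*d25 + d15*d24 = 0"
  "d13*d45 - d14*d35 + d15*d34 = 0"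
  "d23*d45 - d24*d35 + d25*d34 = 0"
  "A = c*(d12+d23+d34+d45)" "p = c*d13" "a0 = c*d15" "a1 = c*d12" "a2 = c*(d12+d23-d13)"
  "a3 = c*(d23+d34-d24)" "a4 = c*(d34+d45-d35)" "a5 = c*d45"
  shows "(p - a1) * A^2
    + (a1*a4 + 2*a1*a2 + a1*a5 - p^2 + a1*p + a0*a1 - a2*p - a3*p - a5*p - a4*p - a0*a2 - a0*p) * A
    - a1*a2*a5 - a1*a2*p - a1*a2*a4 - a1*a4*a5 - a1*a2^2 + a2*a3*p + a3*p^2 - a0*a1*a5
    + a0*a2^2 + a4*a5*p - a0*a1*a2 + a0*a2*a5 + a0*p^2 - a0*a1*p + 2*a0*a2*p + a0*a5*p + a3*a4*p = 0"
  using assms by algebra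

lemma pl: "cross q a b * cross q c d - cross q a c * cross q b d + cross q a d * cross q b c = 0"
  unfolding cross_def by algebra

lemma cyc: "cross a b c = cross b c a"
  unfolding cross_def by algebra

lemma tri3: "cross a b c = cross q a b + cross q b c - cross q a c"
  unfolding cross_def by algebra

lemma sum6: "(\<Sum>i<6::nat. f i) = f 0 + f 1 + f 2 + f 3 + f 4 + (f 5::real)"
  by (simp add: eval_nat_numeral)
lemma shoe: fixes P :: "nat \<Rightarrow> real \<times> real" shows "(\<Sum>i<6. fst (P i) * snd (P ((i+1) mod 6)) - fst (P ((i+1) mod 6)) * snd (P i))
  = cross (P 0) (P 1) (P 2) + cross (P 0) (P 2) (P 3) + cross (P 0) (P 3) (P 4) + cross (P 0) (P 4) (P 5)"
proof -
  have m: "(0+1) mod 6 = (1::nat)" "(1+1) mod 6 = (2::nat)" "(2+1) mod 6 = (3::nat)" "(3+1) mod 6 = (4::nat)"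
    "(4+1) mod 6 = (5::nat)" "(5+1) mod 6 = (0::nat)" by simp_all
  show ?thesis by (simp only: sum6 m) (simp add: cross_def algebra_simps)
qed

theorem theorem3:
  fixes P :: "nat \<Rightarrow> real \<times> real"
  assumes "convex_hexagon P"
  defines "A \<equiv> polygon_area 6 P"
      and "p \<equiv> tri_area (P 0) (P 1) (P 3)"
      and "a0 \<equiv> vtri P 0" and "a1 \<equiv> vtri P 1" and "a2 \<equiv> vtri P 2"
      and "a3 \<equiv> vtri P 3" and "a4 \<equiv> vtri P 4" and "a5 \<equiv> vtri P 5"
  shows "(p - a1) * A^2
    + (a1*a4 + 2*a1*a2 + a1*a5 - p^2 + a1*p + a0*a1 - a2*p - a3*p - a5*p - a4*p - a0*a2 - a0*p) * A
    - a1*a2*a5 - a1*a2*p - a1*a2*a4 - a1*a4*a5 - a1*a2^2 + a2*a3*p + a3*p^2 - a0*a1*a5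
    + a0*a2^2 + a4*a5*p - a0*a1*a2 + a0*a2*a5 + a0*p^2 - a0*a1*p + 2*a0*a2*p + a0*a5*p + a3*a4*p = 0"
proof -
  define d where "d = (\<lambda>i j. cross (P 0) (P i) (P j))"
  have e0: "cross (P 5) (P 0) (P 1) = d 1 5" unfolding d_def cross_def by algebra
  have e1: "cross (P 0) (P 1) (P 2) = d 1 2" unfolding d_def by simp
  have e2: "cross (P 1) (P 2) (P 3) = d 1 2 + d 2 3 - d 1 3" unfolding d_def by (rule tri3)
  have e3: "cross (P 2) (P 3) (P 4) = d 2 3 + d 3 4 - d 2 4" unfolding d_def by (rule tri3)
  have e4: "cross (P 3) (P 4) (P 5) = d 3 4 + d 4 5 - d 3 5" unfolding d_def by (rule tri3)
  have e5: "cross (P 4) (P 5) (P 0) = d 4 5" unfolding d_def by (rule cyc[symmetric])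
  have e23: "cross (P 2) (P 3) (P 0) = d 2 3" unfolding d_def by (rule cyc[symmetric])
  have e34: "cross (P 3) (P 4) (P 0) = d 3 4" unfolding d_def by (rule cyc[symmetric])
  have ep: "cross (P 0) (P 1) (P 3) = d 1 3" unfolding d_def by simp
  have S: "(\<Sum>i<6. fst (P i) * snd (P ((i+1) mod 6)) - fst (P ((i+1) mod 6)) * snd (P i))
     = d 1 2 + d 2 3 + d 3 4 + d 4 5" unfolding d_def by (rule shoe)
  have va: "vtri P 0 = tri_area (P 5) (P 0) (P 1)" "vtri P 1 = tri_area (P 0) (P 1) (P 2)"
    "vtri P 2 = tri_area (P 1) (P 2) (P 3)" "vtri P 3 = tri_area (P 2) (P 3) (P 4)"
    "vtri P 4 = tri_area (P 3) (P 4) (P 5)" "vtri P 5 = tri_area (P 4) (P 5) (P 0)"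
  proof -
    have m: "(0+1) mod 6 = (1::nat)" "(1+1) mod 6 = (2::nat)" "(2+1) mod 6 = (3::nat)" "(3+1) mod 6 = (4::nat)"
      "(4+1) mod 6 = (5::nat)" "(5+1) mod 6 = (0::nat)" "(0+5) mod 6 = (5::nat)" "(1+5) mod 6 = (0::nat)"
      "(2+5) mod 6 = (1::nat)" "(3+5) mod 6 = (2::nat)" "(4+5) mod 6 = (3::nat)" "(5+5) mod 6 = (4::nat)"
      "(0::nat) mod 6 = 0" "(1::nat) mod 6 = 1" "(2::nat) mod 6 = 2" "(3::nat) mod 6 = 3" "(4::nat) mod 6 = 4"
      "(5::nat) mod 6 = 5" by simp_all
    show "vtri P 0 = tri_area (P 5) (P 0) (P 1)" "vtri P 1 = tri_area (P 0) (P 1) (P 2)"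
      "vtri P 2 = tri_area (P 1) (P 2) (P 3)" "vtri P 3 = tri_area (P 2) (P 3) (P 4)"
      "vtri P 4 = tri_area (P 3) (P 4) (P 5)" "vtri P 5 = tri_area (P 4) (P 5) (P 0)"
      unfolding vtri_def m by (rule refl)+
  qed
  have m6: "(0+1) mod 6 = (1::nat)" "(1+1) mod 6 = (2::nat)" "(2+1) mod 6 = (3::nat)" "(3+1) mod 6 = (4::nat)"
    "(4+1) mod 6 = (5::nat)" "(5+1) mod 6 = (0::nat)" by simp_all
  have key: "\<exists>c. A = c*(d 1 2 + d 2 3 + d 3 4 + d 4 5) \<and> p = c * d 1 3 \<and> a0 = c * d 1 5 \<and>
     a1 = c * d 1 2 \<and> a2 = c * (d 1 2 + d 2 3 - d 1 3) \<and> a3 = c * (d 2 3 + d 3 4 - d 2 4) \<and>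
     a4 = c * (d 3 4 + d 4 5 - d 3 5) \<and> a5 = c * d 4 5"
    using assms(1) unfolding convex_hexagon_def
  proof
    assume H: "\<forall>i<6. \<forall>j<6. j \<noteq> i \<and> j \<noteq> (i+1) mod 6 \<longrightarrow> cross (P i) (P ((i+1) mod 6)) (P j) > 0"
    have h: "cross (P 5) (P 0) (P 1) > 0" "cross (P 0) (P 1) (P 2) > 0" "cross (P 1) (P 2) (P 3) > 0"
      "cross (P 2) (P 3) (P 4) > 0" "cross (P 3) (P 4) (P 5) > 0" "cross (P 4) (P 5) (P 0) > 0"
      "cross (P 0) (P 1) (P 3) > 0" "cross (P 2) (P 3) (P 0) > 0" "cross (P 3) (P 4) (P 0) > 0"
      using H[rule_format, of 5 1] H[rule_format, of 0 2] H[rule_format, of 1 3]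
        H[rule_format, of 2 4] H[rule_format, of 3 5] H[rule_format, of 4 0]
        H[rule_format, of 0 3] H[rule_format, of 2 0] H[rule_format, of 3 0] by (simp_all only: m6) simp_all
    show ?thesis
      apply (rule exI[of _ "1/2"])
      using h unfolding A_def p_def a0_def a1_def a2_def a3_def a4_def a5_def va polygon_area_def S
        tri_area_def e0 e1 e2 e3 e4 e5 e23 e34 ep by simp
  next
    assume H: "\<forall>i<6. \<forall>j<6. j \<noteq> i \<and> j \<noteq> (i+1) mod 6 \<longrightarrow> cross (P i) (P ((i+1) mod 6)) (P j) < 0"
    have h: "cross (P 5) (P 0) (P 1) < 0" "cross (P 0) (P 1) (P 2) < 0" "cross (P 1) (P 2) (P 3) < 0"
      "cross (P 2) (P 3) (P 4) < 0" "cross (P 3) (P 4) (P 5) < 0" "cross (P 4) (P 5) (P 0) < 0"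
      "cross (P 0) (P 1) (P 3) < 0" "cross (P 2) (P 3) (P 0) < 0" "cross (P 3) (P 4) (P 0) < 0"
      using H[rule_format, of 5 1] H[rule_format, of 0 2] H[rule_format, of 1 3]
        H[rule_format, of 2 4] H[rule_format, of 3 5] H[rule_format, of 4 0]
        H[rule_format, of 0 3] H[rule_format, of 2 0] H[rule_format, of 3 0] by (simp_all only: m6) simp_all
    show ?thesis
      apply (rule exI[of _ "-1/2"])
      using h unfolding A_def p_def a0_def a1_def a2_def a3_def a4_def a5_def va polygon_area_def S
        tri_area_def e0 e1 e2 e3 e4 e5 e23 e34 ep by (simp add: field_simps)
  qed
  then obtain c where c: "A = c*(d 1 2 + d 2 3 + d 3 4 + d 4 5)" "p = c * d 1 3" "a0 = c * d 1 5"
     "a1 = c * d 1 2" "a2 = c * (d 1 2 + d 2 3 - d 1 3)" "a3 = c * (d 2 3 + d 3 4 - d 2 4)"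
     "a4 = c * (d 3 4 + d 4 5 - d 3 5)" "a5 = c * d 4 5" by blast
  show ?thesis
  proof -
    have r: "d 1 2 * d 3 4 - d 1 3 * d 2 4 + d 1 4 * d 2 3 = 0"
      "d 1 2 * d 3 5 - d 1 3 * d 2 5 + d 1 5 * d 2 3 = 0"
      "d 1 2 * d 4 5 - d 1 4 * d 2 5 + d 1 5 * d 2 4 = 0"
      "d 1 3 * d 4 5 - d 1 4 * d 3 5 + d 1 5 * d 3 4 = 0"
      "d 2 3 * d 4 5 - d 2 4 * d 3 5 + d 2 5 * d 3 4 = 0"
      unfolding d_def by (rule pl)+
    show ?thesis by (rule coreD[OF r c])
  qed
qed

end
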